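(* Let $p\in[1,\infty)$, let $(\rho_t)_{t\in I}\subset L^1_{\rm loc}(\mathbb R^N)$ be non-negative, and let $J\subset I$ with $0\in\overline J$. Suppose there exists $C>0$ such that $\limsup_{t\in J,\,t\to0^+}\mathcal F_{t,p}(u)\le C\|\nabla u\|_{L^p}^p$ for every compactly supported Lipschitz function $u\colon\mathbb R^N\to\mathbb R$. Then $$\sup_{R>0}\ \limsup_{t\in J,\,t\to0^+}\ R^p\int_{\mathbb R^N}\frac{\rho_t(z)}{R^p+|z|^p}\,dz<\infty.$$
   Context: $I=(0,1)$; $\mathcal F_{t,p}(u)=\int\int\frac{|u(x)-u(y)|^p}{|x-y|^p}\rho_t(x-y)\,dx\,dy$ and $\|\nabla u\|^p_{L^p}=\int_{\mathbb R^N}|\nabla u|^pdx$. *)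

theory Defs
  imports "HOL-Analysis.Analysis"
begin

definition F_tp :: "('a::euclidean_space \<Rightarrow> real) \<Rightarrow> real \<Rightarrow> ('a \<Rightarrow> real) \<Rightarrow> ennreal" where
  "F_tp rho p u =
     (\<integral>\<^sup>+ x. (\<integral>\<^sup>+ y. ennreal (\<bar>u x - u y\<bar> powr p / norm (x - y) powr p * rho (x - y)) \<partial>lebesgue) \<partial>lebesgue)"

text \<open>The p-th power of the L^p norm of the gradient: integral of |grad u|^p, where the
  gradient is the (Frechet) derivative wherever u is differentiable (almost everywhere for
  Lipschitz u by Rademacher); its Euclidean norm equals the operator norm of the derivative.\<close>
definition grad_Lp_pow :: "('a::euclidean_space \<Rightarrow> real) \<Rightarrow> real \<Rightarrow> ennreal" where
  "grad_Lp_pow u p =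
     (\<integral>\<^sup>+ x. ennreal (if u differentiable (at x) then onorm (frechet_derivative u (at x)) powr p else 0) \<partial>lebesgue)"

definition locally_integrable :: "('a::euclidean_space \<Rightarrow> real) \<Rightarrow> bool" where
  "locally_integrable f \<longleftrightarrow> f \<in> borel_measurable lebesgue \<and>
     (\<forall>K. compact K \<longrightarrow> set_integrable lebesgue K f)"

definition compactly_supported_lipschitz :: "('a::euclidean_space \<Rightarrow> real) \<Rightarrow> bool" where
  "compactly_supported_lipschitz u \<longleftrightarrow>
     (\<exists>L. L-lipschitz_on UNIV u) \<and> (\<exists>K. compact K \<and> (\<forall>x. x \<notin> K \<longrightarrow> u x = 0))"

end

theory Submission
  imports Defs
begin

lemma lip_deriv_bound:
  fixes f :: "'a::euclidean_space \<Rightarrow> real"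
  assumes lip: "\<And>x y. \<bar>f x - f y\<bar> \<le> norm (x - y)" and D: "(f has_derivative D) (at x)"
  shows "\<bar>D h\<bar> \<le> norm h"
proof -
  have lin: "linear D" using D has_derivative_linear by blast
  have d1: "((\<lambda>s::real. x + s *\<^sub>R h) has_derivative (\<lambda>s. s *\<^sub>R h)) (at 0)"
  proof -
    have hh: "((\<lambda>s::real. s *\<^sub>R h) has_derivative (\<lambda>s. s *\<^sub>R h)) (at 0)"
      by (rule bounded_linear_imp_has_derivative) (rule bounded_linear_scaleR_left)
    show ?thesis using has_derivative_add[OF has_derivative_const[of x] hh] by simp
  qed
  have D': "(f has_derivative D) (at (x + (0::real) *\<^sub>R h))" using D by simp
  have "((\<lambda>s. f (x + s *\<^sub>R h)) has_derivative (\<lambda>s. D (s *\<^sub>R h))) (at 0)"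
    using has_derivative_compose[OF d1 D'] by simp
  then have "((\<lambda>s. f (x + s *\<^sub>R h)) has_field_derivative D h) (at 0)"
    by (rule has_derivative_imp_has_field_derivative) (simp add: linear.scaleR[OF lin])
  then have "((\<lambda>s. (f (x + (0 + s) *\<^sub>R h) - f (x + 0 *\<^sub>R h)) / s) \<longlongrightarrow> D h) (at 0)"
    unfolding DERIV_def by simp
  then have "((\<lambda>s. \<bar>(f (x + s *\<^sub>R h) - f x) / s\<bar>) \<longlongrightarrow> \<bar>D h\<bar>) (at 0)"
    by (intro tendsto_rabs) simp
  moreover have "\<forall>\<^sub>F s in at (0::real). \<bar>(f (x + s *\<^sub>R h) - f x) / s\<bar> \<le> norm h"
  proof (intro always_eventually allI)
    fix s :: real
    have "\<bar>f (x + s *\<^sub>R h) - f x\<bar> \<le> \<bar>s\<bar> * norm h" using lip[of "x + s *\<^sub>R h" x] by simp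
    then show "\<bar>(f (x + s *\<^sub>R h) - f x) / s\<bar> \<le> norm h"
      by (cases "s = 0") (auto simp: abs_divide divide_le_eq mult.commute)
  qed
  ultimately show ?thesis by (rule tendsto_upperbound) simp
qed

lemma emeasure_ball_eq:
  fixes c :: "'a::euclidean_space"
  assumes "r \<ge> 0"
  shows "emeasure lebesgue (ball c r) = ennreal (r ^ DIM('a) * measure lborel (ball (0::'a) 1))"
proof -
  have "ennreal (measure lborel (ball c r)) = emeasure lebesgue (ball c r)"
    using emeasure_lborel_ball_finite[of c r] by (subst emeasure_eq_ennreal_measure) auto
  then show ?thesis using content_ball_conv_unit_ball[OF assms, of c] by simp
qed

lemma nn_integral_reflect:
  fixes g :: "'a::euclidean_space \<Rightarrow> ennreal"
  assumes g[measurable]: "g \<in> borel_measurable lebesgue"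
  shows "(\<integral>\<^sup>+y. g (x - y) \<partial>lebesgue) = (\<integral>\<^sup>+z. g z \<partial>lebesgue)"
proof -
  have T: "(\<lambda>z. x + (\<Sum>j\<in>Basis. (- 1 * (z \<bullet> j)) *\<^sub>R j)) = (\<lambda>z::'a. x - z)"
  proof
    fix z :: 'a
    have "(\<Sum>j\<in>Basis. (- 1 * (z \<bullet> j)) *\<^sub>R j) = - (\<Sum>j\<in>Basis. (z \<bullet> j) *\<^sub>R j)"
      by (simp add: sum_negf[symmetric])
    then show "x + (\<Sum>j\<in>Basis. (- 1 * (z \<bullet> j)) *\<^sub>R j) = x - z"
      by (simp add: euclidean_representation)
  qed
  have L: "lebesgue = density (distr lebesgue lebesgue (\<lambda>z::'a. x - z)) (\<lambda>_. 1)"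
    using lebesgue_affine_euclidean[where c="\<lambda>_. -1" and t=x] unfolding T by simp
  have M: "(\<lambda>z::'a. x - z) \<in> lebesgue \<rightarrow>\<^sub>M lebesgue"
    using lebesgue_affine_measurable[where c="\<lambda>_. -1" and t=x] unfolding T by simp
  have "(\<integral>\<^sup>+z. g z \<partial>lebesgue) = (\<integral>\<^sup>+z. g z \<partial>density (distr lebesgue lebesgue (\<lambda>z::'a. x - z)) (\<lambda>_. 1))"
    using L by simp
  also have "\<dots> = (\<integral>\<^sup>+z. g z \<partial>distr lebesgue lebesgue (\<lambda>z::'a. x - z))"
    by (subst nn_integral_density) (auto simp: M)
  also have "\<dots> = (\<integral>\<^sup>+y. g (x - y) \<partial>lebesgue)"
    by (subst nn_integral_distr[OF M]) auto
  finally show ?thesis ..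
qed

lemma unit_ball_pos: "measure lborel (ball (0::'a::euclidean_space) 1) > 0"
  using content_ball_pos[of 1 "0::'a"] by simp

lemma P0:
  fixes x z :: "'a::euclidean_space"
  assumes R: "R > 0" and n: "n \<ge> 1" and p: "p \<ge> 1" and rz: "r \<ge> 0"
   and x: "norm x < R/(16*n)" and z: "R/(4*n) \<le> norm z"
  shows "(8*n) powr (-p) * (R powr p * r / (R powr p + norm z powr p))
     \<le> \<bar>max 0 (R - norm x) - max 0 (R - norm (x - z))\<bar> powr p / norm z powr p * r"
proof -
  define d where "d = R/(4*n)"
  have d: "d > 0" "d \<le> R/4" using R n by (auto simp: d_def field_simps)
  have xd: "norm x < d/4" using x by (simp add: d_def)
  have "norm (x - z) \<ge> norm z - norm x" by (metis norm_minus_commute norm_triangle_ineq2)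
  then have yb: "norm (x - z) \<ge> 3*d/4" using xd z d_def by linarith
  have ux: "max 0 (R - norm x) = R - norm x" using xd d by auto
  have "max 0 (R - norm x) - max 0 (R - norm (x - z)) \<ge> d/2"
    using ux yb xd d by (auto simp: max_def)
  then have D: "\<bar>max 0 (R - norm x) - max 0 (R - norm (x - z))\<bar> \<ge> R/(8*n)"
    unfolding d_def by auto
  have zp: "norm z > 0" using z R n by (smt (verit) divide_pos_pos)
  have zpp: "norm z powr p > 0" using zp by simp
  have Rp: "R powr p > 0" using R by simp
  have e: "(8*n) powr (-p) * R powr p = (R/(8*n)) powr p"
    using R n by (simp add: powr_divide powr_minus_divide)
  have "(8*n) powr (-p) * (R powr p * r / (R powr p + norm z powr p))
      \<le> (8*n) powr (-p) * (R powr p * r / norm z powr p)"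
    using zpp Rp rz n by (intro mult_left_mono divide_left_mono) (auto intro!: mult_pos_pos add_pos_pos)
  also have "\<dots> = (R/(8*n)) powr p / norm z powr p * r" using e by (simp add: field_simps)
  also have "\<dots> \<le> \<bar>max 0 (R - norm x) - max 0 (R - norm (x - z))\<bar> powr p / norm z powr p * r"
    using D zpp rz R n p by (intro mult_right_mono divide_right_mono powr_mono2) auto
  finally show ?thesis .
qed

lemma Pb:
  fixes x z b :: "'a::euclidean_space"
  assumes R: "R > 0" and n: "n \<ge> 1" and p: "p \<ge> 1" and rz: "r \<ge> 0"
   and b: "b \<in> Basis" and x: "norm (x - (3/8*R) *\<^sub>R b) < R/(8*n)"
   and z0: "z \<noteq> 0" and z: "norm z < R/(4*n)" and zb: "norm z / n \<le> \<bar>z \<bullet> b\<bar>"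
  shows "(8*n) powr (-p) * (R powr p * r / (R powr p + norm z powr p))
     \<le> \<bar>max 0 (R - norm x) - max 0 (R - norm (x - z))\<bar> powr p / norm z powr p * r"
proof -
  define d where "d = R/(4*n)"
  define w where "w = x - (3/8*R) *\<^sub>R b"
  have d: "d > 0" "d \<le> R/4" using R n by (auto simp: d_def field_simps)
  have nb: "norm b = 1" using b by simp
  have xw: "x = (3/8*R) *\<^sub>R b + w" by (simp add: w_def)
  have wn: "norm w < d/2" using x by (simp add: w_def d_def)
  have xz0: "x \<bullet> z = (3/8*R) * (b \<bullet> z) + w \<bullet> z" unfolding xw inner_add_left inner_scaleR_left by simp
  have xz: "x \<bullet> z = (3/8*R) * (z \<bullet> b) + w \<bullet> z" using xz0 by (simp add: inner_commute)
  have cs: "\<bar>w \<bullet> z\<bar> \<le> norm w * norm z" by (rule Cauchy_Schwarz_ineq2)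
  have zp: "norm z > 0" using z0 by simp
  have key0: "\<bar>z \<bullet> b\<bar> * (3/8*R) \<ge> norm z * (3 * d / 2)"
    using zb n R zp by (simp add: d_def field_simps)
  have wz: "norm w * norm z \<le> d/2 * norm z" using wn zp by simp
  have wz2: "\<bar>w \<bullet> z\<bar> \<le> d/2 * norm z" using cs wz by linarith
  have xzb: "\<bar>x \<bullet> z\<bar> \<ge> d * norm z"
  proof (cases "z \<bullet> b \<ge> 0")
    case True
    then have "(3/8*R) * (z \<bullet> b) \<ge> 3*d/2 * norm z" using key0 by (simp add: mult.commute)
    then show ?thesis using xz wz2 by linarith
  next
    case False
    then have "(3/8*R) * (z \<bullet> b) \<le> - (3*d/2 * norm z)" using key0 by (simp add: mult.commute) (simp add: algebra_simps)
    then show ?thesis using xz wz2 by linarith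
  qed
  have sq: "(norm x)^2 - (norm (x - z))^2 = 2 * (x \<bullet> z) - (norm z)^2"
    by (simp add: power2_norm_eq_inner inner_diff inner_commute)
  have "\<bar>(norm x)^2 - (norm (x - z))^2\<bar> \<ge> d * norm z"
  proof (cases "x \<bullet> z \<ge> 0")
    case True
    then have "x \<bullet> z \<ge> d * norm z" using xzb by simp
    moreover have "(norm z)^2 \<le> d * norm z"
    proof -
      have "norm z * norm z \<le> d * norm z" using z zp unfolding d_def by (intro mult_right_mono) auto
      then show ?thesis by (simp add: power2_eq_square)
    qed
    ultimately show ?thesis using sq by linarith
  next
    case False
    then have "x \<bullet> z \<le> - d * norm z" using xzb by simp
    moreover have "d * norm z \<ge> 0" using d by simp
    moreover have "(norm z)^2 \<ge> 0" by simp
    ultimately show ?thesis using sq by linarith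
  qed
  have nx: "norm x \<le> R/2"
  proof -
    have "norm x \<le> norm ((3/8*R) *\<^sub>R b) + norm w" unfolding xw by (rule norm_triangle_ineq)
    then show ?thesis using nb R wn d by simp
  qed
  have ny: "norm (x - z) < R" using norm_triangle_ineq4[of x z] nx z d unfolding d_def by linarith
  have ux: "max 0 (R - norm x) - max 0 (R - norm (x - z)) = norm (x - z) - norm x"
    using nx ny R by auto
  have fac: "(norm x)^2 - (norm (x - z))^2 = (norm x - norm (x - z)) * (norm x + norm (x - z))"
    by (simp add: power2_eq_square algebra_simps)
  have s2: "norm x + norm (x - z) \<le> 2 * R" using nx ny R by linarith
  have "d * norm z \<le> \<bar>norm x - norm (x - z)\<bar> * (norm x + norm (x - z))"
    using \<open>\<bar>(norm x)^2 - (norm (x - z))^2\<bar> \<ge> d * norm z\<close> unfolding fac abs_mult by simp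
  also have "\<dots> \<le> \<bar>norm x - norm (x - z)\<bar> * (2 * R)" using s2 by (intro mult_left_mono) auto
  finally have "d * norm z \<le> \<bar>norm x - norm (x - z)\<bar> * (2 * R)" .
  then have D: "\<bar>norm x - norm (x - z)\<bar> / norm z \<ge> 1/(8*n)"
    using zp R n by (simp add: d_def field_simps)
  have zpp: "norm z powr p > 0" using zp by simp
  have Rp: "R powr p > 0" using R by simp
  have e: "(8*n) powr (-p) = (1/(8*n)) powr p"
    using n by (simp add: powr_divide powr_minus_divide)
  have "(8*n) powr (-p) * (R powr p * r / (R powr p + norm z powr p)) \<le> (8*n) powr (-p) * r"
  proof (intro mult_left_mono)
    have "R powr p * r \<le> (R powr p + norm z powr p) * r" using zpp rz by (intro mult_right_mono) auto
    moreover have "R powr p + norm z powr p > 0" using zpp Rp by linarith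
    ultimately show "R powr p * r / (R powr p + norm z powr p) \<le> r" by (simp add: divide_le_eq mult.commute)
  qed simp
  also have "\<dots> \<le> (\<bar>norm x - norm (x - z)\<bar> / norm z) powr p * r"
    unfolding e using D rz n p by (intro mult_right_mono powr_mono2) auto
  also have "\<dots> = \<bar>max 0 (R - norm x) - max 0 (R - norm (x - z))\<bar> powr p / norm z powr p * r"
    unfolding ux using zp by (simp add: powr_divide abs_minus_commute)
  finally show ?thesis .
qed

lemma csl_tent:
  "compactly_supported_lipschitz (\<lambda>x::'a::euclidean_space. max 0 (R - norm x))"
  unfolding compactly_supported_lipschitz_def
proof (intro conjI exI)
  show "1-lipschitz_on UNIV (\<lambda>x::'a. max 0 (R - norm x))"
  proof (rule lipschitz_onI)
    fix x y :: 'a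
    have "\<bar>norm x - norm y\<bar> \<le> norm (x - y)" by (rule norm_triangle_ineq3)
    then show "dist (max 0 (R - norm x)) (max 0 (R - norm y)) \<le> 1 * dist x y"
      by (auto simp: dist_real_def dist_norm max_def)
  qed simp
  show "compact (cball (0::'a) \<bar>R\<bar>)" by simp
  show "\<forall>x. x \<notin> cball 0 \<bar>R\<bar> \<longrightarrow> max 0 (R - norm x) = 0" by auto
qed

lemma grad_tent:
  fixes R p :: real
  assumes R: "R > 0" and p: "p \<ge> 1"
  shows "grad_Lp_pow (\<lambda>x::'a::euclidean_space. max 0 (R - norm x)) p \<le> emeasure lebesgue (ball (0::'a) (2*R))"
proof -
  let ?u = "\<lambda>x::'a. max 0 (R - norm x)"
  have lip: "\<bar>?u x - ?u y\<bar> \<le> norm (x - y)" for x y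
  proof -
    have "\<bar>norm x - norm y\<bar> \<le> norm (x - y)" by (rule norm_triangle_ineq3)
    then show ?thesis by (auto simp: max_def)
  qed
  have pt: "ennreal (if ?u differentiable (at x) then onorm (frechet_derivative ?u (at x)) powr p else 0)
      \<le> indicator (ball (0::'a) (2*R)) x" for x
  proof (cases "?u differentiable (at x)")
    case True
    then have D: "(?u has_derivative frechet_derivative ?u (at x)) (at x)"
      using frechet_derivative_works by blast
    have on: "onorm (frechet_derivative ?u (at x)) \<le> 1"
      by (rule onorm_le) (use lip_deriv_bound[OF lip D] in simp)
    have on0: "onorm (frechet_derivative ?u (at x)) \<ge> 0"
      by (rule onorm_pos_le) (rule has_derivative_bounded_linear[OF D])
    show ?thesis
    proof (cases "norm x < 2*R")
      case True
      have "onorm (frechet_derivative ?u (at x)) powr p \<le> 1 powr p"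
        using on on0 p by (intro powr_mono2) auto
      then show ?thesis using True True by (simp add: indicator_def)
    next
      case False
      have "((\<lambda>_. 0::real) has_derivative (\<lambda>_. 0)) (at x)" by simp
      then have "(?u has_derivative (\<lambda>_. 0)) (at x)"
      proof (rule has_derivative_transform_within_open)
        have "{y::'a. R < norm y} = - cball 0 R" by auto
        then show "open {y::'a. R < norm y}" by (simp add: open_Compl)
        show "x \<in> {y::'a. R < norm y}" using False R by simp
      qed auto
      then have "frechet_derivative ?u (at x) = (\<lambda>_. 0)"
        using frechet_derivative_at by metis
      then show ?thesis by (simp add: onorm_zero)
    qed
  next
    case False then show ?thesis by simp
  qed
  have "grad_Lp_pow ?u p \<le> (\<integral>\<^sup>+x. indicator (ball (0::'a) (2*R)) x \<partial>lebesgue)"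
    unfolding grad_Lp_pow_def by (rule nn_integral_mono) (rule pt)
  also have "\<dots> = emeasure lebesgue (ball (0::'a) (2*R))" by simp
  finally show ?thesis .
qed

lemma basis_cover:
  fixes z :: "'a::euclidean_space"
  assumes "z \<noteq> 0"
  shows "\<exists>b\<in>Basis. norm z / DIM('a) \<le> \<bar>z \<bullet> b\<bar>"
proof (rule ccontr)
  assume "\<not> ?thesis"
  then have lt: "\<And>b. b \<in> Basis \<Longrightarrow> \<bar>z \<bullet> b\<bar> < norm z / DIM('a)" by force
  have "norm z \<le> (\<Sum>b\<in>Basis. \<bar>z \<bullet> b\<bar>)" by (rule norm_le_l1)
  also have "\<dots> < (\<Sum>b\<in>(Basis::'a set). norm z / DIM('a))"
    using lt by (intro sum_strict_mono) auto
  also have "\<dots> = norm z" by simp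
  finally show False by simp
qed

lemma bl: "(g::'a::euclidean_space \<Rightarrow> 'b::topological_space) \<in> borel_measurable borel \<Longrightarrow> g \<in> borel_measurable lebesgue"
  by (rule measurable_compose[OF id_borel_measurable_lebesgue, of g, unfolded id_def])

lemma bs: "(A::'a::euclidean_space set) \<in> sets borel \<Longrightarrow> A \<in> sets lebesgue"
  by (rule sets_completionI_sets) simp

lemma ball_lower:
  fixes I :: ennreal
  assumes B: "B \<in> sets lebesgue" "emeasure lebesgue B = ennreal v" "v > 0" and c: "c > 0"
  and h: "\<And>x. x \<in> B \<Longrightarrow> ennreal c * I \<le> Phi x"
  shows "I \<le> ennreal (1/(c * v)) * (\<integral>\<^sup>+x. Phi x \<partial>lebesgue)"
proof -
  have "ennreal (c * v) * I = (\<integral>\<^sup>+x. (ennreal c * I) * indicator B x \<partial>lebesgue)"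
    using nn_integral_cmult_indicator[OF B(1), of "ennreal c * I"] B c
    by (simp add: ennreal_mult mult_ac)
  also have "\<dots> \<le> (\<integral>\<^sup>+x. Phi x \<partial>lebesgue)"
    by (intro nn_integral_mono) (auto simp: indicator_def h)
  finally have 1: "ennreal (c * v) * I \<le> (\<integral>\<^sup>+x. Phi x \<partial>lebesgue)" .
  have "ennreal (1/(c * v)) * (ennreal (c * v) * I) \<le> ennreal (1/(c * v)) * (\<integral>\<^sup>+x. Phi x \<partial>lebesgue)"
    using 1 by (rule mult_left_mono) simp
  moreover have "ennreal (1/(c * v)) * (ennreal (c * v) * I) = I"
  proof -
    have "ennreal (1/(c * v)) * ennreal (c * v) = ennreal (1/(c * v) * (c * v))"
      using c B by (subst ennreal_mult'') auto
    also have "\<dots> = 1" using c B by simp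
    finally show ?thesis by (simp add: mult.assoc[symmetric])
  qed
  ultimately show ?thesis by simp
qed

lemma per_t:
  fixes r :: "'a::euclidean_space \<Rightarrow> real" and R p :: real
  assumes rm[measurable]: "r \<in> borel_measurable lebesgue" and r0: "\<And>z. r z \<ge> 0"
    and R: "R > 0" and p: "p \<ge> 1"
  shows "ennreal (R powr p) * (\<integral>\<^sup>+z. ennreal (r z / (R powr p + norm z powr p)) \<partial>lebesgue)
     \<le> ennreal ((1 + real DIM('a)) / ((8 * real DIM('a)) powr (-p) * ((R/(16 * real DIM('a)))^DIM('a) * measure lborel (ball (0::'a) 1))))
        * F_tp r p (\<lambda>x. max 0 (R - norm x))"
proof -
  define n where "n = real DIM('a)"
  have n: "n \<ge> 1" unfolding n_def by simp
  define u where "u = (\<lambda>x::'a. max 0 (R - norm x))"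
  define c where "c = (8*n) powr (-p)"
  have c: "c > 0" unfolding c_def using n by simp
  define v where "v = (R/(16*n))^DIM('a) * measure lborel (ball (0::'a) 1)"
  have v: "v > 0" unfolding v_def using R n unit_ball_pos by simp
  define k where "k = (\<lambda>z::'a. ennreal (R powr p * r z / (R powr p + norm z powr p)))"
  have qm: "(\<lambda>z::'a. R powr p / (R powr p + norm z powr p)) \<in> borel_measurable lebesgue"
    by (rule bl) measurable
  have qr: "(\<lambda>z::'a. R powr p / (R powr p + norm z powr p) * r z) \<in> borel_measurable lebesgue"
    by (rule borel_measurable_times[OF qm rm])
  have km: "k \<in> borel_measurable lebesgue"
  proof -
    have keq: "k = (\<lambda>z. ennreal (R powr p / (R powr p + norm z powr p) * r z))"
      unfolding k_def by (rule ext) (simp only: times_divide_eq_left)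
    show ?thesis by (subst keq) (rule measurable_compose[OF qr measurable_ennreal])
  qed
  have q2m: "(\<lambda>z::'a. 1 / (R powr p + norm z powr p)) \<in> borel_measurable lebesgue"
    by (rule bl) measurable
  have q2r: "(\<lambda>z::'a. 1 / (R powr p + norm z powr p) * r z) \<in> borel_measurable lebesgue"
    by (rule borel_measurable_times[OF q2m rm])
  have k2m: "(\<lambda>z. ennreal (r z / (R powr p + norm z powr p))) \<in> borel_measurable lebesgue"
  proof -
    have keq: "(\<lambda>z. ennreal (r z / (R powr p + norm z powr p))) = (\<lambda>z. ennreal (1 / (R powr p + norm z powr p) * r z))"
      by (rule ext) simp
    show ?thesis by (subst keq) (rule measurable_compose[OF q2r measurable_ennreal])
  qed
  define A0 where "A0 = {z::'a. R/(4*n) \<le> norm z}"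
  define A where "A = (\<lambda>b. {z::'a. z \<noteq> 0 \<and> norm z < R/(4*n) \<and> norm z / n \<le> \<bar>z \<bullet> b\<bar>})"
  have A0m: "A0 \<in> sets lebesgue" unfolding A0_def by (rule bs) measurable
  have Am: "A b \<in> sets lebesgue" for b unfolding A_def by (rule bs) measurable
  have kA0: "(\<lambda>z. k z * indicator A0 z) \<in> borel_measurable lebesgue"
    by (intro borel_measurable_times_ennreal borel_measurable_indicator km A0m)
  have kA: "(\<lambda>z. k z * indicator (A b) z) \<in> borel_measurable lebesgue" for b
    by (intro borel_measurable_times_ennreal borel_measurable_indicator km Am)
  define g where "g = (\<lambda>x z. ennreal (\<bar>u x - u (x - z)\<bar> powr p / norm z powr p * r z))"
  have gm: "g x \<in> borel_measurable lebesgue" for x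
  proof -
    have hm: "(\<lambda>z::'a. \<bar>u x - u (x - z)\<bar> powr p / norm z powr p) \<in> borel_measurable lebesgue"
      unfolding u_def by (rule bl) measurable
    have "(\<lambda>z::'a. \<bar>u x - u (x - z)\<bar> powr p / norm z powr p * r z) \<in> borel_measurable lebesgue"
      by (rule borel_measurable_times[OF hm rm])
    from measurable_compose[OF this measurable_ennreal] show ?thesis unfolding g_def .
  qed
  define Phi where "Phi = (\<lambda>x. \<integral>\<^sup>+y. ennreal (\<bar>u x - u y\<bar> powr p / norm (x - y) powr p * r (x - y)) \<partial>lebesgue)"
  have F: "F_tp r p u = (\<integral>\<^sup>+x. Phi x \<partial>lebesgue)" unfolding F_tp_def Phi_def ..
  have Phieq: "Phi x = (\<integral>\<^sup>+z. g x z \<partial>lebesgue)" for x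
  proof -
    have "(\<integral>\<^sup>+z. g x z \<partial>lebesgue) = (\<integral>\<^sup>+y. g x (x - y) \<partial>lebesgue)"
      by (rule nn_integral_reflect[OF gm, symmetric])
    also have "\<dots> = Phi x" unfolding Phi_def g_def by simp
    finally show ?thesis by simp
  qed
  have mB: "emeasure lebesgue (ball a (R/(16*n))) = ennreal v" for a :: 'a
    unfolding v_def using R n by (subst emeasure_ball_eq) auto
  have I0: "(\<integral>\<^sup>+z. k z * indicator A0 z \<partial>lebesgue) \<le> ennreal (1/(c * v)) * F_tp r p u"
    unfolding F
  proof (rule ball_lower[OF _ mB v c])
    fix x assume x: "x \<in> ball (0::'a) (R/(16*n))"
    have "ennreal c * (\<integral>\<^sup>+z. k z * indicator A0 z \<partial>lebesgue) = (\<integral>\<^sup>+z. ennreal c * (k z * indicator A0 z) \<partial>lebesgue)"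
      by (rule nn_integral_cmult[symmetric]) (rule kA0)
    also have "\<dots> \<le> (\<integral>\<^sup>+z. g x z \<partial>lebesgue)"
    proof (intro nn_integral_mono)
      fix z
      show "ennreal c * (k z * indicator A0 z) \<le> g x z"
      proof (cases "z \<in> A0")
        case True
        have "c * (R powr p * r z / (R powr p + norm z powr p)) \<le> \<bar>u x - u (x - z)\<bar> powr p / norm z powr p * r z"
          unfolding c_def u_def using True x by (intro P0 R n p r0) (auto simp: A0_def)
        then show ?thesis using True c R r0
          by (auto simp: k_def g_def ennreal_mult''[symmetric] intro!: ennreal_leI)
      qed simp
    qed
    finally show "ennreal c * (\<integral>\<^sup>+z. k z * indicator A0 z \<partial>lebesgue) \<le> Phi x" unfolding Phieq .
  qed (intro bs borel_open open_ball)
  have Ib: "(\<integral>\<^sup>+z. k z * indicator (A b) z \<partial>lebesgue) \<le> ennreal (1/(c * v)) * F_tp r p u"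
    if b: "b \<in> Basis" for b
    unfolding F
  proof (rule ball_lower[OF _ mB v c])
    fix x assume x: "x \<in> ball ((3/8*R) *\<^sub>R b) (R/(16*n))"
    have x': "norm (x - (3/8*R) *\<^sub>R b) < R/(8*n)"
    proof -
      have "norm (x - (3/8*R) *\<^sub>R b) < R/(16*n)" using x by (simp add: dist_norm norm_minus_commute)
      also have "\<dots> \<le> R/(8*n)" using R n by (simp add: frac_le)
      finally show ?thesis .
    qed
    have "ennreal c * (\<integral>\<^sup>+z. k z * indicator (A b) z \<partial>lebesgue) = (\<integral>\<^sup>+z. ennreal c * (k z * indicator (A b) z) \<partial>lebesgue)"
      by (rule nn_integral_cmult[symmetric]) (rule kA)
    also have "\<dots> \<le> (\<integral>\<^sup>+z. g x z \<partial>lebesgue)"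
    proof (intro nn_integral_mono)
      fix z
      show "ennreal c * (k z * indicator (A b) z) \<le> g x z"
      proof (cases "z \<in> A b")
        case True
        have "c * (R powr p * r z / (R powr p + norm z powr p)) \<le> \<bar>u x - u (x - z)\<bar> powr p / norm z powr p * r z"
          unfolding c_def u_def using True x' b by (intro Pb R n p r0) (auto simp: A_def)
        then show ?thesis using True c R r0
          by (auto simp: k_def g_def ennreal_mult''[symmetric] intro!: ennreal_leI)
      qed simp
    qed
    finally show "ennreal c * (\<integral>\<^sup>+z. k z * indicator (A b) z \<partial>lebesgue) \<le> Phi x" unfolding Phieq .
  qed (intro bs borel_open open_ball)
  have cov: "AE z in lebesgue. k z \<le> k z * indicator A0 z + (\<Sum>b\<in>Basis. k z * indicator (A b) z)"
  proof -
    have "AE z in lebesgue. z \<noteq> (0::'a)" by (rule AE_completion) (rule AE_lborel_singleton)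
    then show ?thesis
    proof (rule eventually_mono)
      fix z :: 'a assume z: "z \<noteq> 0"
      show "k z \<le> k z * indicator A0 z + (\<Sum>b\<in>Basis. k z * indicator (A b) z)"
      proof (cases "z \<in> A0")
        case True then show ?thesis by simp
      next
        case False
        obtain b where b: "b \<in> Basis" "norm z / n \<le> \<bar>z \<bullet> b\<bar>"
          using basis_cover[OF z] unfolding n_def by blast
        then have zb: "z \<in> A b" using False z by (auto simp: A_def A0_def)
        have "k z = k z * indicator (A b) z" using zb by simp
        also have "\<dots> \<le> (\<Sum>b\<in>Basis. k z * indicator (A b) z)"
          by (rule member_le_sum) (use b in auto)
        also have "\<dots> \<le> k z * indicator A0 z + (\<Sum>b\<in>Basis. k z * indicator (A b) z)" by simp
        finally show ?thesis .
      qed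
    qed
  qed
  have "ennreal (R powr p) * (\<integral>\<^sup>+z. ennreal (r z / (R powr p + norm z powr p)) \<partial>lebesgue)
      = (\<integral>\<^sup>+z. ennreal (R powr p) * ennreal (r z / (R powr p + norm z powr p)) \<partial>lebesgue)"
    by (rule nn_integral_cmult[symmetric]) (rule k2m)
  also have "\<dots> = (\<integral>\<^sup>+z. k z \<partial>lebesgue)"
  proof (rule nn_integral_cong)
    fix z :: 'a
    have "R powr p > 0" using R by simp
    moreover have "norm z powr p \<ge> 0" by simp
    ultimately have "R powr p + norm z powr p > 0" by linarith
    then have "r z / (R powr p + norm z powr p) \<ge> 0" using r0 by simp
    then show "ennreal (R powr p) * ennreal (r z / (R powr p + norm z powr p)) = k z"
      unfolding k_def by (subst ennreal_mult''[symmetric]) auto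
  qed
  also have "\<dots> \<le> (\<integral>\<^sup>+z. k z * indicator A0 z + (\<Sum>b\<in>Basis. k z * indicator (A b) z) \<partial>lebesgue)"
    by (rule nn_integral_mono_AE[OF cov])
  also have "\<dots> = (\<integral>\<^sup>+z. k z * indicator A0 z \<partial>lebesgue) + (\<Sum>b\<in>Basis. \<integral>\<^sup>+z. k z * indicator (A b) z \<partial>lebesgue)"
  proof -
    have sm: "(\<lambda>z. \<Sum>b\<in>Basis. k z * indicator (A b) z) \<in> borel_measurable lebesgue"
      by (rule borel_measurable_sum) (rule kA)
    have ss: "(\<integral>\<^sup>+z. (\<Sum>b\<in>Basis. k z * indicator (A b) z) \<partial>lebesgue) = (\<Sum>b\<in>Basis. \<integral>\<^sup>+z. k z * indicator (A b) z \<partial>lebesgue)"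
      by (rule nn_integral_sum) (rule kA)
    show ?thesis unfolding nn_integral_add[OF kA0 sm] ss ..
  qed
  also have "\<dots> \<le> ennreal (1/(c * v)) * F_tp r p u + (\<Sum>b\<in>(Basis::'a set). ennreal (1/(c * v)) * F_tp r p u)"
    using I0 Ib by (intro add_mono sum_mono) auto
  also have "\<dots> = ennreal ((1 + n) / (c * v)) * F_tp r p u"
  proof -
    have nn: "n \<ge> 0" using n by simp
    have cv: "1/(c * v) \<ge> 0" using c v by simp
    have "ennreal ((1 + n) / (c * v)) = ennreal ((1 + n) * (1/(c * v)))" by simp
    also have "\<dots> = ennreal (1 + n) * ennreal (1/(c * v))" using nn cv by (intro ennreal_mult) auto
    also have "ennreal (1 + n) = 1 + of_nat DIM('a)"
      using nn unfolding n_def by (simp only: ennreal_plus[OF zero_le_one nn[unfolded n_def]] ennreal_of_nat_eq_real_of_nat ennreal_1)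
    finally have e: "ennreal ((1 + n) / (c * v)) = (1 + of_nat DIM('a)) * ennreal (1/(c * v))" .
    have s: "(\<Sum>b\<in>(Basis::'a set). ennreal (1/(c * v)) * F_tp r p u) = of_nat DIM('a) * (ennreal (1/(c * v)) * F_tp r p u)"
      by (simp only: sum_constant)
    show ?thesis unfolding e s by (simp only: distrib_right mult_1 mult.assoc)
  qed
  finally show ?thesis unfolding n_def c_def v_def u_def .
qed

theorem lemma2p11:
  fixes rho :: "real \<Rightarrow> 'a::euclidean_space \<Rightarrow> real"
    and p :: real and J :: "real set" and C :: real
  assumes p: "1 \<le> p"
    and rho_loc: "\<And>t. t \<in> {0<..<1} \<Longrightarrow> locally_integrable (rho t)"
    and rho_nonneg: "\<And>t z. t \<in> {0<..<1} \<Longrightarrow> rho t z \<ge> 0"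
    and J: "J \<subseteq> {0<..<1}" "0 \<in> closure J"
    and C: "C > 0"
    and bound: "\<And>u. compactly_supported_lipschitz u \<Longrightarrow>
        Limsup (at 0 within J) (\<lambda>t. F_tp (rho t) p u) \<le> ennreal C * grad_Lp_pow u p"
  shows "(SUP R\<in>{0<..}. Limsup (at 0 within J)
            (\<lambda>t. ennreal (R powr p) * (\<integral>\<^sup>+ z. ennreal (rho t z / (R powr p + norm z powr p)) \<partial>lebesgue)))
         < \<infinity>"
proof -
  define n where "n = real DIM('a)"
  have n: "n \<ge> 1" unfolding n_def by simp
  define M where "M = (1 + n) * C * (32*n)^DIM('a) / (8*n) powr (-p)"
  have Jbot: "at 0 within J \<noteq> bot"
  proof -
    have "0 \<notin> J" using J by auto
    then have "0 islimpt J" using J(2) by (auto simp: closure_def)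
    then show ?thesis using trivial_limit_within by blast
  qed
  have ev: "\<forall>\<^sub>F t in at 0 within J. t \<in> J" by (simp add: eventually_at_filter)
  have "Limsup (at 0 within J)
            (\<lambda>t. ennreal (R powr p) * (\<integral>\<^sup>+ z. ennreal (rho t z / (R powr p + norm z powr p)) \<partial>lebesgue))
        \<le> ennreal M" if R: "R > 0" for R
  proof -
    define u where "u = (\<lambda>x::'a. max 0 (R - norm x))"
    define \<omega> where "\<omega> = measure lborel (ball (0::'a) 1)"
    have \<omega>: "\<omega> > 0" unfolding \<omega>_def by (rule unit_ball_pos)
    define K where "K = (1 + n) / ((8 * n) powr (-p) * ((R/(16 * n))^DIM('a) * \<omega>))"
    have K: "K \<ge> 0" unfolding K_def using n R \<omega> by simp
    have "Limsup (at 0 within J)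
            (\<lambda>t. ennreal (R powr p) * (\<integral>\<^sup>+ z. ennreal (rho t z / (R powr p + norm z powr p)) \<partial>lebesgue))
        \<le> Limsup (at 0 within J) (\<lambda>t. ennreal K * F_tp (rho t) p u)"
    proof (rule Limsup_mono)
      show "\<forall>\<^sub>F t in at 0 within J. ennreal (R powr p) * (\<integral>\<^sup>+ z. ennreal (rho t z / (R powr p + norm z powr p)) \<partial>lebesgue)
          \<le> ennreal K * F_tp (rho t) p u"
        using ev
      proof (rule eventually_mono)
        fix t assume "t \<in> J"
        then have t: "t \<in> {0<..<1}" using J by auto
        have m: "rho t \<in> borel_measurable lebesgue" using rho_loc[OF t] by (simp add: locally_integrable_def)
        show "ennreal (R powr p) * (\<integral>\<^sup>+ z. ennreal (rho t z / (R powr p + norm z powr p)) \<partial>lebesgue)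
          \<le> ennreal K * F_tp (rho t) p u"
          using per_t[OF m rho_nonneg[OF t] R p] unfolding K_def \<omega>_def u_def n_def .
      qed
    qed
    also have "\<dots> = ennreal K * Limsup (at 0 within J) (\<lambda>t. F_tp (rho t) p u)"
    proof (rule Limsup_compose_continuous_mono[OF _ _ Jbot])
      show "continuous_on UNIV ((*) (ennreal K))"
        by (rule ennreal_continuous_on_cmult) (auto intro: continuous_on_id)
      show "mono ((*) (ennreal K))" by (auto simp: mono_def intro: mult_left_mono)
    qed
    also have "\<dots> \<le> ennreal K * (ennreal C * grad_Lp_pow u p)"
      by (intro mult_left_mono bound) (auto simp: u_def csl_tent)
    also have "\<dots> \<le> ennreal K * (ennreal C * emeasure lebesgue (ball (0::'a) (2*R)))"
      unfolding u_def by (intro mult_left_mono grad_tent R p) auto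
    also have "\<dots> = ennreal (K * (C * ((2*R)^DIM('a) * \<omega>)))"
    proof -
      have e: "emeasure lebesgue (ball (0::'a) (2*R)) = ennreal ((2*R)^DIM('a) * \<omega>)"
        unfolding \<omega>_def using R by (intro emeasure_ball_eq) simp
      have p1: "(2*R)^DIM('a) * \<omega> \<ge> 0" using R \<omega> by simp
      show ?thesis unfolding e using R C K \<omega> p1
        by (simp only: ennreal_mult[symmetric] mult_nonneg_nonneg less_imp_le)
    qed
    also have "K * (C * ((2*R)^DIM('a) * \<omega>)) = M"
    proof -
      have "(2*R)^DIM('a) = (32*n)^DIM('a) * (R/(16*n))^DIM('a)"
        unfolding power_mult_distrib[symmetric] using n by (simp add: field_simps)
      then show ?thesis unfolding K_def M_def using n R \<omega> by (simp add: field_simps)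
    qed
    finally show ?thesis .
  qed
  then have "(SUP R\<in>{0<..}. Limsup (at 0 within J)
            (\<lambda>t. ennreal (R powr p) * (\<integral>\<^sup>+ z. ennreal (rho t z / (R powr p + norm z powr p)) \<partial>lebesgue)))
         \<le> ennreal M" by (intro SUP_least) auto
  also have "\<dots> < \<infinity>" by simp
  finally show ?thesis .
qed

end
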